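(* Let $\mathcal{X}=\{1,\dots,n\}$, let $\pi$ be a strictly positive probability distribution on $\mathcal{X}$, let $P$ be a $\pi$-reversible transition matrix, let $G$ be the Gibbs kernel induced by some partition of $\mathcal{X}$, and let $A_\alpha=\alpha P+(1-\alpha)G$. Then for every integer $l\geq2$ and every $\alpha\in(0,1)$, $$\|A_\alpha^l-\Pi\|_{F,\pi}^2\leq(n-1)(1-\alpha\gamma^*(P))^{2l}.$$
   Context: $\pi$-reversible means $\pi(x)P(x,y)=\pi(y)P(y,x)$. Gibbs kernel of a partition $\bigsqcup_i\mathcal{O}_i$: $G(x,y)=\pi(y)/\pi(\mathcal{O}(x))$ if $y\in\mathcal{O}(x)$ and $0$ otherwise. $\Pi$ is the matrix with every row equal to $\pi$; $\|M\|_{F,\pi}^2=\operatorname{Tr}(M^*M)$ with $M^*(x,y)=\pi(y)M(y,x)/\pi(x)$. For $\pi$-reversible $P$ with eigenvalues $\lambda_1\ge\dots\ge\lambda_n$, $\gamma^*(P)=1-\max\{|\lambda_2(P)|,|\lambda_n(P)|\}$. *)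

theory Defs
  imports "Jordan_Normal_Form.Jordan_Normal_Form" "HOL-Library.Disjoint_Sets"
begin

text \<open>State space X = {0..<n} (0-based rendering of {1..n}); matrices are n x n real matrices.\<close>

definition prob_dist :: "nat \<Rightarrow> (nat \<Rightarrow> real) \<Rightarrow> bool" where
  "prob_dist n \<pi> \<longleftrightarrow> (\<forall>x<n. \<pi> x > 0) \<and> (\<Sum>x<n. \<pi> x) = 1"

definition transition_matrix :: "nat \<Rightarrow> real mat \<Rightarrow> bool" where
  "transition_matrix n P \<longleftrightarrow> P \<in> carrier_mat n n \<and>
     (\<forall>x<n. \<forall>y<n. P $$ (x,y) \<ge> 0) \<and> (\<forall>x<n. (\<Sum>y<n. P $$ (x,y)) = 1)"

definition reversible :: "nat \<Rightarrow> (nat \<Rightarrow> real) \<Rightarrow> real mat \<Rightarrow> bool" where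
  "reversible n \<pi> P \<longleftrightarrow> (\<forall>x<n. \<forall>y<n. \<pi> x * P $$ (x,y) = \<pi> y * P $$ (y,x))"

definition block_of :: "nat set set \<Rightarrow> nat \<Rightarrow> nat set" where
  "block_of Os x = (THE B. B \<in> Os \<and> x \<in> B)"

definition gibbs_kernel :: "nat \<Rightarrow> (nat \<Rightarrow> real) \<Rightarrow> nat set set \<Rightarrow> real mat" where
  "gibbs_kernel n \<pi> Os = mat n n (\<lambda>(x,y).
     if y \<in> block_of Os x then \<pi> y / (\<Sum>z\<in>block_of Os x. \<pi> z) else 0)"

definition Pi_mat :: "nat \<Rightarrow> (nat \<Rightarrow> real) \<Rightarrow> real mat" where
  "Pi_mat n \<pi> = mat n n (\<lambda>(x,y). \<pi> y)"

definition pi_adjoint :: "nat \<Rightarrow> (nat \<Rightarrow> real) \<Rightarrow> real mat \<Rightarrow> real mat" where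
  "pi_adjoint n \<pi> M = mat n n (\<lambda>(x,y). \<pi> y * M $$ (y,x) / \<pi> x)"

definition frob_sq :: "nat \<Rightarrow> (nat \<Rightarrow> real) \<Rightarrow> real mat \<Rightarrow> real" where
  "frob_sq n \<pi> M = (\<Sum>x<n. (pi_adjoint n \<pi> M * M) $$ (x,x))"

text \<open>Eigenvalues with multiplicity, in non-increasing order
  (lambda_1 = eig_list P ! 0, ..., lambda_n = eig_list P ! (n-1)).\<close>
definition eig_list :: "real mat \<Rightarrow> real list" where
  "eig_list P = (THE ls. sorted (rev ls) \<and>
      char_poly P = prod_list (map (\<lambda>a. [:- a, 1:]) ls))"

definition abs_spectral_gap :: "nat \<Rightarrow> real mat \<Rightarrow> real" where
  "abs_spectral_gap n P = 1 - max \<bar>eig_list P ! 1\<bar> \<bar>eig_list P ! (n - 1)\<bar>"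

end

theory Submission
  imports Defs "Jordan_Normal_Form.Schur_Decomposition"
begin



lemma real_cscalar[simp]: "(v::real vec) \<bullet>c w = v \<bullet> w"
  by (simp add: conjugate_vec_def scalar_prod_def)

lemma orth_preserve:
  fixes W :: "real mat"
  assumes W: "W \<in> carrier_mat n n" and WW: "W\<^sup>T * W = 1\<^sub>m n"
    and x: "x \<in> carrier_vec n" and y: "y \<in> carrier_vec n"
  shows "(W *\<^sub>v x) \<bullet> (W *\<^sub>v y) = x \<bullet> y"
proof -
  have "(W *\<^sub>v x) \<bullet> (W *\<^sub>v y) = (W\<^sup>T *\<^sub>v (W *\<^sub>v x)) \<bullet> y"
    using transpose_vec_mult_scalar[OF W y, of "W *\<^sub>v x"] W x by auto
  also have "W\<^sup>T *\<^sub>v (W *\<^sub>v x) = (W\<^sup>T * W) *\<^sub>v x"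
    using W x by (subst assoc_mult_mat_vec) auto
  also have "\<dots> = x" using WW x by simp
  finally show ?thesis .
qed

lemma spectral_real:
  fixes A :: "real mat"
  shows "A \<in> carrier_mat n n \<Longrightarrow> A\<^sup>T = A \<Longrightarrow> char_poly A = (\<Prod>e\<leftarrow>es. [:-e,1:]) \<Longrightarrow>
   \<exists>ws. length ws = n \<and> set ws \<subseteq> carrier_vec n \<and> (\<forall>i<n. A *\<^sub>v ws!i = es!i \<cdot>\<^sub>v ws!i)
     \<and> (\<forall>i<n. \<forall>j<n. ws!i \<bullet> ws!j = (if i = j then 1 else 0))"
proof (induction es arbitrary: n A)
  case Nil
  from degree_monic_char_poly[OF Nil(1)] Nil(3) have "n = 0" by simp
  then show ?case by (intro exI[of _ "[]"]) auto
next
  case (Cons e es n A)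
  note A = Cons(2) and sym = Cons(3)
  have cp: "char_poly A = [:-e,1:] * (\<Prod>e\<leftarrow>es. [:-e,1:])" using Cons(4) by simp
  have mon: "monic (\<Prod>e\<leftarrow> es. [:- e, 1:])" by (rule monic_prod_list, auto)
  have deg: "degree (char_poly A) = Suc (degree (\<Prod>e\<leftarrow> es. [:- e, 1:]))" unfolding cp
    by (subst degree_mult_eq, insert mon, auto)
  with degree_monic_char_poly[OF A] have n: "n \<noteq> 0" by auto
  have ev: "eigenvalue A e" unfolding eigenvalue_root_char_poly[OF A] cp by simp
  define v where "v = find_eigenvector A e"
  from find_eigenvector[OF A ev] have "eigenvector A v e" unfolding v_def .
  hence v: "v \<in> carrier_vec n" and v0: "v \<noteq> 0\<^sub>v n" and Av: "A *\<^sub>v v = e \<cdot>\<^sub>v v"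
    using A unfolding eigenvector_def by auto
  interpret cof_vec_space n "TYPE(real)" .
  define b where "b = basis_completion v"
  from basis_completion[OF v v0, folded b_def]
  have dist_b: "distinct b" and indep: "\<not> lin_dep (set b)" and b: "set b \<subseteq> carrier_vec n"
    and hdb: "hd b = v" and len_b: "length b = n" by auto
  from hdb len_b n obtain vs where bv: "b = v # vs" by (cases b, auto)
  define ws where "ws = gram_schmidt n b"
  from gram_schmidt_result[OF b dist_b indep refl, folded ws_def]
  have ws: "set ws \<subseteq> carrier_vec n" "corthogonal ws" "length ws = n"
    by (auto simp: len_b)
  from gram_schmidt_hd[OF v, of vs, folded bv] have hdws: "hd ws = v" unfolding ws_def .
  have ws0: "ws ! 0 = v" using hdws ws(3) n by (cases ws) auto
  define us where "us = map (\<lambda>w. (1 / sqrt (w \<bullet> w)) \<cdot>\<^sub>v w) ws"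
  have lus: "length us = n" using ws by (simp add: us_def)
  have wsc: "\<And>i. i < n \<Longrightarrow> ws ! i \<in> carrier_vec n" using ws by auto
  have uscar: "\<And>i. i < n \<Longrightarrow> us ! i \<in> carrier_vec n" using wsc ws by (simp add: us_def)
  have wpos: "\<And>i. i < n \<Longrightarrow> ws ! i \<bullet> ws ! i > 0"
  proof -
    fix i assume i: "i < n"
    have "ws ! i \<bullet> ws ! i \<noteq> 0" using corthogonalD[OF ws(2), of i i] i ws(3) by simp
    moreover have "ws ! i \<bullet> ws ! i \<ge> 0" unfolding scalar_prod_def
      by (intro sum_nonneg) auto
    ultimately show "ws ! i \<bullet> ws ! i > 0" by linarith
  qed
  have orthus: "\<And>i j. i < n \<Longrightarrow> j < n \<Longrightarrow> us ! i \<bullet> us ! j = (if i = j then 1 else 0)"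
  proof -
    fix i j assume i: "i < n" and j: "j < n"
    have "us ! i \<bullet> us ! j = (1 / sqrt (ws!i \<bullet> ws!i)) * (1 / sqrt (ws!j \<bullet> ws!j)) * (ws!i \<bullet> ws!j)"
      using i j ws wsc[OF i] wsc[OF j] by (simp add: us_def)
    also have "\<dots> = (if i = j then 1 else 0)"
    proof (cases "i = j")
      case True
      then show ?thesis using wpos[OF i]
        by (simp add: field_simps)
    next
      case False
      then show ?thesis using corthogonalD[OF ws(2), of i j] i j ws(3) by simp
    qed
    finally show "us ! i \<bullet> us ! j = (if i = j then 1 else 0)" .
  qed
  have us0: "us ! 0 = (1 / sqrt (v \<bullet> v)) \<cdot>\<^sub>v v" using ws0 ws(3) n by (simp add: us_def)
  have Aus0: "A *\<^sub>v us ! 0 = e \<cdot>\<^sub>v us ! 0"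
    unfolding us0 using A v Av by (simp add: mult_mat_vec smult_smult_assoc mult.commute)
  define W where "W = mat_of_cols n us"
  have W: "W \<in> carrier_mat n n" unfolding W_def using lus by (simp add: mat_of_cols_def)
  have colW: "\<And>i. i < n \<Longrightarrow> col W i = us ! i" unfolding W_def using lus uscar by simp
  have WTW: "W\<^sup>T * W = 1\<^sub>m n"
    by (rule eq_matI, insert W colW orthus, auto)
  have WWT: "W * W\<^sup>T = 1\<^sub>m n"
    by (rule mat_mult_left_right_inverse[OF _ W WTW], insert W, auto)
  define A' where "A' = W\<^sup>T * A * W"
  have A': "A' \<in> carrier_mat n n" unfolding A'_def using W A by auto
  have A'ij: "\<And>i j. i < n \<Longrightarrow> j < n \<Longrightarrow> A' $$ (i,j) = us ! i \<bullet> (A *\<^sub>v us ! j)"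
  proof -
    fix i j assume i: "i < n" and j: "j < n"
    have "A' = W\<^sup>T * (A * W)" unfolding A'_def using W A by (simp add: assoc_mult_mat)
    hence "A' $$ (i,j) = row W\<^sup>T i \<bullet> col (A * W) j" using i j W A by simp
    also have "\<dots> = us ! i \<bullet> (A *\<^sub>v us ! j)" using i j W A colW by (simp add: mult_mat_vec_def)
    finally show "A' $$ (i,j) = us ! i \<bullet> (A *\<^sub>v us ! j)" .
  qed
  have symA': "A'\<^sup>T = A'"
  proof -
    have "A'\<^sup>T = (A * W)\<^sup>T * (W\<^sup>T)\<^sup>T" unfolding A'_def using W A
      by (subst assoc_mult_mat[of _ n n _ n _ n], simp_all, subst transpose_mult[of _ n n _ n], auto)
    also have "\<dots> = (W\<^sup>T * A\<^sup>T) * W" using W A by (subst transpose_mult[of _ n n _ n], auto)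
    also have "\<dots> = A'" unfolding A'_def sym ..
    finally show ?thesis .
  qed
  have A'0: "\<And>i. i < n \<Longrightarrow> A' $$ (i,0) = (if i = 0 then e else 0)"
  proof -
    fix i assume i: "i < n"
    have "A' $$ (i,0) = us ! i \<bullet> (e \<cdot>\<^sub>v us ! 0)" using A'ij[OF i] Aus0 n by simp
    also have "\<dots> = e * (us ! i \<bullet> us ! 0)" using uscar[OF i] uscar[of 0] n by simp
    finally show "A' $$ (i,0) = (if i = 0 then e else 0)" using orthus[OF i, of 0] n by simp
  qed
  have A'0': "\<And>j. j < n \<Longrightarrow> A' $$ (0,j) = (if j = 0 then e else 0)"
  proof -
    fix j assume j: "j < n"
    have "A' $$ (0,j) = A'\<^sup>T $$ (j,0)" using A' j n by simp
    then show "A' $$ (0,j) = (if j = 0 then e else 0)" using symA' A'0[OF j] by simp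
  qed
  define m where "m = n - 1"
  have nm: "n = Suc m" using n unfolding m_def by simp
  define A3 where "A3 = mat m m (\<lambda>(i,j). A' $$ (Suc i, Suc j))"
  have A3: "A3 \<in> carrier_mat m m" unfolding A3_def by simp
  have symA3: "A3\<^sup>T = A3"
  proof (rule eq_matI)
    fix i j assume "i < dim_row A3" "j < dim_col A3"
    hence i: "i < m" and j: "j < m" using A3 by auto
    have "A' $$ (Suc j, Suc i) = A'\<^sup>T $$ (Suc i, Suc j)" using A' i j nm by simp
    then show "A3\<^sup>T $$ (i, j) = A3 $$ (i, j)" using i j symA' unfolding A3_def by simp
  qed (use A3 in auto)
  have blk: "A' = four_block_mat (mat 1 1 (\<lambda>_. e)) (0\<^sub>m 1 m) (0\<^sub>m m 1) A3"
  proof (rule eq_matI)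
    fix i j assume "i < dim_row (four_block_mat (mat 1 1 (\<lambda>_. e)) (0\<^sub>m 1 m) (0\<^sub>m m 1) A3)"
      "j < dim_col (four_block_mat (mat 1 1 (\<lambda>_. e)) (0\<^sub>m 1 m) (0\<^sub>m m 1) A3)"
    hence i: "i < n" and j: "j < n" using A3 nm by auto
    show "A' $$ (i, j) = four_block_mat (mat 1 1 (\<lambda>_. e)) (0\<^sub>m 1 m) (0\<^sub>m m 1) A3 $$ (i, j)"
      using i j A3 A'0 A'0' nm unfolding A3_def
      by (cases i; cases j; simp)
  qed (use A' A3 nm in auto)
  have "similar_mat A' A"
    by (rule similar_matI[where n=n and P="W\<^sup>T" and Q=W], insert W A A' WTW WWT, auto simp: A'_def)
  hence "char_poly A = char_poly A'" using char_poly_similar by metis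
  also have "\<dots> = char_poly (mat 1 1 (\<lambda>_. e)) * char_poly A3"
    unfolding blk by (rule char_poly_four_block_zeros_col, insert A3, auto)
  also have "char_poly (mat 1 1 (\<lambda>_. e)) = [:-e, 1:]"
    by (simp add: char_poly_defs det_def sign_def)
  finally have cp3: "char_poly A3 = (\<Prod>e\<leftarrow>es. [:-e,1:])" using cp
    by (metis mult_cancel_left pCons_eq_0_iff zero_neq_one)
  from Cons.IH[OF A3 symA3 cp3] obtain ys where ys: "length ys = m" "set ys \<subseteq> carrier_vec m"
    "\<forall>i<m. A3 *\<^sub>v ys ! i = es ! i \<cdot>\<^sub>v ys ! i"
    "\<forall>i<m. \<forall>j<m. ys ! i \<bullet> ys ! j = (if i = j then 1 else 0)" by blast
  define lift where "lift = (\<lambda>y::real vec. vec n (\<lambda>i. if i = 0 then 0 else y $ (i - 1)))"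
  define zs where "zs = unit_vec n 0 # map lift ys"
  have lzs: "length zs = n" using ys nm by (simp add: zs_def)
  have zsc: "\<And>i. i < n \<Longrightarrow> zs ! i \<in> carrier_vec n"
    unfolding zs_def lift_def using ys nm by (auto simp add: nth_Cons split: nat.split)
  have liftc: "\<And>y. lift y \<in> carrier_vec n" unfolding lift_def by simp
  have shift: "\<And>(f::nat \<Rightarrow> real) y. y \<in> carrier_vec m \<Longrightarrow> vec n f \<bullet> lift y = (\<Sum>j<m. f (Suc j) * y $ j)"
  proof -
    fix f :: "nat \<Rightarrow> real" and y :: "real vec" assume y: "y \<in> carrier_vec m"
    have "vec n f \<bullet> lift y = (\<Sum>j<Suc m. f j * (if j = 0 then 0 else y $ (j - 1)))"
      unfolding scalar_prod_def lift_def nm by (simp add: atLeast0LessThan)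
    also have "\<dots> = (\<Sum>j<m. f (Suc j) * y $ j)" by (subst sum.lessThan_Suc_shift) simp
    finally show "vec n f \<bullet> lift y = (\<Sum>j<m. f (Suc j) * y $ j)" .
  qed
  have rowA': "\<And>i. i < n \<Longrightarrow> row A' i = vec n (\<lambda>j. A' $$ (i,j))"
    using A' by (auto simp: row_def)
  have liftev: "\<And>y c. y \<in> carrier_vec m \<Longrightarrow> A3 *\<^sub>v y = c \<cdot>\<^sub>v y \<Longrightarrow> A' *\<^sub>v lift y = c \<cdot>\<^sub>v lift y"
  proof -
    fix y c assume y: "y \<in> carrier_vec m" and ev: "A3 *\<^sub>v y = c \<cdot>\<^sub>v y"
    show "A' *\<^sub>v lift y = c \<cdot>\<^sub>v lift y"
    proof (rule eq_vecI)
      fix i assume "i < dim_vec (c \<cdot>\<^sub>v lift y)"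
      hence i: "i < n" by (simp add: lift_def)
      have "(A' *\<^sub>v lift y) $ i = (\<Sum>j<m. A' $$ (i, Suc j) * y $ j)"
        using i A' rowA'[OF i] shift[OF y] by simp
      also have "\<dots> = (c \<cdot>\<^sub>v lift y) $ i"
      proof (cases i)
        case 0
        then show ?thesis using A'0' nm by (simp add: lift_def)
      next
        case (Suc k)
        hence k: "k < m" using i nm by simp
        have "(\<Sum>j<m. A' $$ (i, Suc j) * y $ j) = (A3 *\<^sub>v y) $ k"
          using k A3 y unfolding Suc A3_def by (simp add: scalar_prod_def row_def atLeast0LessThan)
        also have "\<dots> = c * y $ k" using ev k y by simp
        finally show ?thesis using Suc i by (simp add: lift_def)
      qed
      finally show "(A' *\<^sub>v lift y) $ i = (c \<cdot>\<^sub>v lift y) $ i" .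
    qed (use A' in \<open>simp add: lift_def\<close>)
  qed
  have unitev: "A' *\<^sub>v unit_vec n 0 = e \<cdot>\<^sub>v unit_vec n 0"
  proof (rule eq_vecI)
    fix i assume "i < dim_vec (e \<cdot>\<^sub>v unit_vec n 0)"
    hence i: "i < n" by simp
    have "(A' *\<^sub>v unit_vec n 0) $ i = A' $$ (i, 0)" using i A' n by simp
    then show "(A' *\<^sub>v unit_vec n 0) $ i = (e \<cdot>\<^sub>v unit_vec n 0) $ i" using A'0[OF i] i n by simp
  qed (use A' in simp)
  have zsev: "\<And>i. i < n \<Longrightarrow> A' *\<^sub>v zs ! i = (e # es) ! i \<cdot>\<^sub>v zs ! i"
  proof -
    fix i assume i: "i < n"
    show "A' *\<^sub>v zs ! i = (e # es) ! i \<cdot>\<^sub>v zs ! i"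
    proof (cases i)
      case 0 then show ?thesis using unitev by (simp add: zs_def)
    next
      case (Suc k)
      hence k: "k < m" using i nm by simp
      have yk: "ys ! k \<in> carrier_vec m" using ys k by (metis nth_mem subsetD)
      then show ?thesis unfolding Suc zs_def using ys k liftev[of "ys ! k" "es ! k"] by auto
    qed
  qed
  have zsorth: "\<And>i j. i < n \<Longrightarrow> j < n \<Longrightarrow> zs ! i \<bullet> zs ! j = (if i = j then 1 else 0)"
  proof -
    fix i j assume i: "i < n" and j: "j < n"
    have u1: "unit_vec n 0 \<bullet> lift y = 0" for y
      using n by (simp add: lift_def)
    have u2: "lift y \<bullet> unit_vec n 0 = 0" for y
      using n by (simp add: lift_def)
    have ll: "lift y \<bullet> lift y' = y \<bullet> y'" if "y \<in> carrier_vec m" "y' \<in> carrier_vec m" for y y'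
    proof -
      have "lift y = vec n (\<lambda>i. if i = 0 then 0 else y $ (i - 1))" by (simp add: lift_def)
      then have "lift y \<bullet> lift y' = (\<Sum>j<m. y $ j * y' $ j)" using shift[OF that(2)] by simp
      then show ?thesis using that by (simp add: scalar_prod_def atLeast0LessThan)
    qed
    show "zs ! i \<bullet> zs ! j = (if i = j then 1 else 0)"
    proof (cases i; cases j)
      fix k l assume "i = Suc k" "j = Suc l"
      moreover have "ys ! k \<in> carrier_vec m" "ys ! l \<in> carrier_vec m" using ys i j nm \<open>i = Suc k\<close> \<open>j = Suc l\<close>
        by (auto intro: subsetD[OF ys(2)])
      ultimately show ?thesis using i j nm ys ll[of "ys ! k" "ys ! l"] by (auto simp: zs_def)
    qed (use i j n u1 u2 ys nm in \<open>auto simp: zs_def\<close>)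
  qed
  have AW: "A * W = W * A'"
  proof -
    have "W * A' = (W * W\<^sup>T) * A * W" unfolding A'_def using W A
      by (simp add: assoc_mult_mat[of _ n n _ n _ n])
    then show ?thesis using WWT A W by simp
  qed
  define fs where "fs = map (\<lambda>z. W *\<^sub>v z) zs"
  show ?case
  proof (intro exI[of _ fs] conjI allI impI)
    show "length fs = n" using lzs by (simp add: fs_def)
    show "set fs \<subseteq> carrier_vec n" using W lzs zsc by (auto simp: fs_def set_conv_nth)
    fix i assume i: "i < n"
    have "A *\<^sub>v fs ! i = (A * W) *\<^sub>v zs ! i" using i lzs A W zsc[OF i] by (simp add: fs_def)
    also have "\<dots> = W *\<^sub>v (A' *\<^sub>v zs ! i)" unfolding AW using W A' zsc[OF i] by simp
    also have "\<dots> = (e # es) ! i \<cdot>\<^sub>v fs ! i" unfolding zsev[OF i] using W zsc[OF i] i lzs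
      by (simp add: fs_def mult_mat_vec)
    finally show "A *\<^sub>v fs ! i = (e # es) ! i \<cdot>\<^sub>v fs ! i" .
  next
    fix i j assume i: "i < n" and j: "j < n"
    show "fs ! i \<bullet> fs ! j = (if i = j then 1 else 0)"
      using orth_preserve[OF W WTW zsc[OF i] zsc[OF j]] zsorth[OF i j] i j lzs by (simp add: fs_def)
  qed
qed



lemma sym_eig_real:
  fixes A :: "real mat" and v :: "complex vec"
  assumes A: "A \<in> carrier_mat n n" and sym: "A\<^sup>T = A"
    and v: "v \<in> carrier_vec n" and v0: "v \<noteq> 0\<^sub>v n"
    and ev: "map_mat complex_of_real A *\<^sub>v v = a \<cdot>\<^sub>v v"
  shows "cnj a = a"
proof -
  have Aij: "\<And>i j. i < n \<Longrightarrow> j < n \<Longrightarrow> A $$ (j,i) = A $$ (i,j)"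
  proof -
    fix i j assume "i < n" "j < n"
    then have "A\<^sup>T $$ (i,j) = A $$ (j,i)" using A by simp
    then show "A $$ (j,i) = A $$ (i,j)" using sym by simp
  qed
  have Av: "\<And>i. i < n \<Longrightarrow> (\<Sum>j<n. of_real (A $$ (i,j)) * v $ j) = a * v $ i"
  proof -
    fix i assume i: "i < n"
    have "(map_mat complex_of_real A *\<^sub>v v) $ i = (\<Sum>j<n. of_real (A $$ (i,j)) * v $ j)"
      using i A v by (simp add: scalar_prod_def row_def atLeast0LessThan)
    then show "(\<Sum>j<n. of_real (A $$ (i,j)) * v $ j) = a * v $ i" using ev i v by simp
  qed
  define s where "s = (\<Sum>i<n. cnj (v $ i) * (\<Sum>j<n. of_real (A $$ (i,j)) * v $ j))"
  define N where "N = (\<Sum>i<n. cnj (v $ i) * v $ i)"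
  have sN: "s = a * N" unfolding s_def N_def using Av by (simp add: sum_distrib_left mult_ac)
  have "cnj s = (\<Sum>i<n. v $ i * (\<Sum>j<n. of_real (A $$ (i,j)) * cnj (v $ j)))"
    unfolding s_def by (simp add: cnj_sum)
  also have "\<dots> = (\<Sum>i<n. \<Sum>j<n. v $ i * of_real (A $$ (i,j)) * cnj (v $ j))"
    by (simp add: sum_distrib_left mult_ac)
  also have "\<dots> = (\<Sum>j<n. \<Sum>i<n. v $ i * of_real (A $$ (i,j)) * cnj (v $ j))"
    by (rule sum.swap)
  also have "\<dots> = s" unfolding s_def
    by (simp add: sum_distrib_left mult_ac Aij)
  finally have cs: "cnj s = s" .
  have Nr: "N = of_real (\<Sum>i<n. (cmod (v $ i))\<^sup>2)"
    unfolding N_def of_real_sum by (intro sum.cong refl) (metis complex_norm_square mult.commute)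
  have "\<exists>i<n. v $ i \<noteq> 0" using v v0 by (metis carrier_vecD eq_vecI index_zero_vec(1) index_zero_vec(2))
  then obtain i where i: "i < n" "v $ i \<noteq> 0" by blast
  have "(\<Sum>i<n. (cmod (v $ i))\<^sup>2) > 0"
    by (rule sum_pos2[of _ i]) (use i in auto)
  hence N0: "N \<noteq> 0" unfolding Nr by (metis of_real_eq_0_iff less_irrefl)
  have cN: "cnj N = N" unfolding Nr by (rule Reals_cnj_iff[THEN iffD1]) simp
  have "cnj a * N = a * N" using cs sN cN by (metis complex_cnj_mult)
  then show ?thesis using N0 by simp
qed

lemma real_split:
  fixes A :: "real mat"
  assumes A: "A \<in> carrier_mat n n" and sym: "A\<^sup>T = A"
  shows "\<exists>es. char_poly A = (\<Prod>e\<leftarrow>es. [:-e,1:])"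
proof -
  define Ac where "Ac = map_mat complex_of_real A"
  have Ac: "Ac \<in> carrier_mat n n" unfolding Ac_def using A by simp
  obtain as where cA: "char_poly Ac = (\<Prod>a\<leftarrow>as. [:-a,1:])"
    using char_poly_factorized[OF Ac] by blast
  have re: "\<And>a. a \<in> set as \<Longrightarrow> cnj a = a"
  proof -
    fix a assume a: "a \<in> set as"
    have "poly (char_poly Ac) a = 0" unfolding cA using a
      by (simp add: poly_prod_list prod_list_zero_iff)
    hence "eigenvalue Ac a" using eigenvalue_root_char_poly[OF Ac] by simp
    then obtain v where "eigenvector Ac v a" unfolding eigenvalue_def by blast
    hence "v \<in> carrier_vec n" "v \<noteq> 0\<^sub>v n" "Ac *\<^sub>v v = a \<cdot>\<^sub>v v"
      unfolding eigenvector_def using Ac by auto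
    then show "cnj a = a" using sym_eig_real[OF A sym] unfolding Ac_def by blast
  qed
  define es where "es = map Re as"
  have as: "as = map complex_of_real es" unfolding es_def
  proof -
    have "map complex_of_real (map Re as) = map (\<lambda>a. a) as"
      unfolding map_map by (rule map_cong[OF refl]) (metis Reals_cnj_iff of_real_Re re o_apply)
    then show "as = map complex_of_real (map Re as)" by simp
  qed
  interpret h: map_poly_inj_idom_hom "of_real :: real \<Rightarrow> complex" ..
  have "map_poly complex_of_real (char_poly A) = char_poly Ac"
    unfolding Ac_def by (rule of_real_hom.char_poly_hom[OF A, symmetric])
  also have "\<dots> = map_poly complex_of_real (\<Prod>e\<leftarrow>es. [:-e,1:])"
    unfolding cA as h.hom_prod_list by (simp add: o_def)
  finally have "char_poly A = (\<Prod>e\<leftarrow>es. [:-e,1:])" by (rule h.injectivity)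
  then show ?thesis by blast
qed



lemma prod_lin_mset: "(\<Prod>x\<leftarrow>xs. [:-x,1:]) = prod_mset (image_mset (\<lambda>x. [:-x,1::'a::idom:]) (mset xs))"
  by (induction xs) auto

lemma prod_linear_mset:
  fixes xs ys :: "'a::idom list"
  shows "(\<Prod>x\<leftarrow>xs. [:-x,1:]) = (\<Prod>y\<leftarrow>ys. [:-y,1:]) \<Longrightarrow> mset xs = mset ys"
proof (induction xs arbitrary: ys)
  case Nil
  have "degree (\<Prod>y\<leftarrow>ys. [:-y,1:]) = length ys"
    using degree_linear_factors[of uminus ys] by simp
  then show ?case using Nil by simp
next
  case (Cons x xs)
  have "poly (\<Prod>y\<leftarrow>ys. [:-y,1:]) x = 0" using Cons(2)[symmetric] by (simp add: poly_prod_list)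
  hence "x \<in> set ys" by (auto simp: poly_prod_list prod_list_zero_iff)
  hence ms: "mset ys = add_mset x (mset (remove1 x ys))" by (metis insert_DiffM mset_remove1 set_mset_mset)
  have "(\<Prod>y\<leftarrow>ys. [:-y,1:]) = [:-x,1:] * (\<Prod>y\<leftarrow>remove1 x ys. [:-y,1:])"
    by (simp only: prod_lin_mset ms image_mset_add_mset prod_mset.add_mset)
  with Cons(2) have "[:-x,1:] * (\<Prod>y\<leftarrow>xs. [:-y,1:]) = [:-x,1:] * (\<Prod>y\<leftarrow>remove1 x ys. [:-y,1:])"
    by (simp only: list.map prod_list.Cons)
  moreover have nz: "[:-x,1:] \<noteq> (0::'a poly)" by simp
  ultimately have "(\<Prod>y\<leftarrow>xs. [:-y,1:]) = (\<Prod>y\<leftarrow>remove1 x ys. [:-y,1:])"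
    using mult_left_cancel[OF nz] by (simp only:)
  from Cons.IH[OF this] show ?case using ms by (simp only: mset.simps)
qed

lemma eig_list_props:
  assumes "char_poly A = (\<Prod>e\<leftarrow>es. [:-e,1:])"
  shows "sorted (rev (eig_list A)) \<and> char_poly A = (\<Prod>e\<leftarrow>eig_list A. [:-e,1:])"
proof -
  let ?Q = "\<lambda>ls. sorted (rev ls) \<and> char_poly A = (\<Prod>a\<leftarrow>ls. [:-a,1:])"
  have ex: "?Q (rev (sort es))"
  proof
    show "sorted (rev (rev (sort es)))" by simp
    show "char_poly A = (\<Prod>a\<leftarrow>rev (sort es). [:-a,1:])"
      unfolding assms by (simp only: prod_lin_mset mset_rev mset_sort)
  qed
  have un: "ls = rev (sort es)" if "?Q ls" for ls
  proof -
    have "mset ls = mset es" using that assms prod_linear_mset by metis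
    hence "sort es = rev ls" using that by (intro properties_for_sort) auto
    then show ?thesis by simp
  qed
  have "?Q (THE ls. ?Q ls)" by (rule theI[of ?Q, OF ex un])
  then show ?thesis unfolding eig_list_def .
qed



lemma mult_diag_right:
  fixes X :: "'a::comm_ring_1 mat"
  assumes X: "X \<in> carrier_mat n n" and a: "a < n" and j: "j < n"
  shows "(X * mat n n (\<lambda>(i,j). if i = j then d i else 0)) $$ (a,j) = X $$ (a,j) * d j"
proof -
  have "(X * mat n n (\<lambda>(i,j). if i = j then d i else 0)) $$ (a,j)
     = (\<Sum>k\<in>{0..<n}. X $$ (a,k) * (if k = j then d k else 0))"
    using X a j by (simp add: scalar_prod_def row_def col_def)
  also have "\<dots> = X $$ (a,j) * d j" using j
    by (simp add: if_distrib[of "\<lambda>t. X $$ (a,_) * t"] sum.delta' cong: if_cong)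
  finally show ?thesis .
qed

lemma mult_diag_left:
  fixes X :: "'a::comm_ring_1 mat"
  assumes X: "X \<in> carrier_mat n n" and a: "a < n" and j: "j < n"
  shows "(mat n n (\<lambda>(i,j). if i = j then d i else 0) * X) $$ (a,j) = d a * X $$ (a,j)"
proof -
  have "(mat n n (\<lambda>(i,j). if i = j then d i else 0) * X) $$ (a,j)
     = (\<Sum>k\<in>{0..<n}. (if a = k then d a else 0) * X $$ (k,j))"
    using X a j by (simp add: scalar_prod_def row_def col_def)
  also have "\<dots> = d a * X $$ (a,j)" using a
    by (simp add: if_distrib[of "\<lambda>t. t * X $$ (_,j)"] sum.delta cong: if_cong)
  finally show ?thesis .
qed

lemma diag_mult_vec:
  fixes c :: "'a::comm_ring_1 vec"
  assumes c: "c \<in> carrier_vec n"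
  shows "mat n n (\<lambda>(i,j). if i = j then d i else 0) *\<^sub>v c = vec n (\<lambda>i. d i * c $ i)"
proof (rule eq_vecI)
  fix i assume "i < dim_vec (vec n (\<lambda>i. d i * c $ i))"
  hence i: "i < n" by simp
  have "(mat n n (\<lambda>(i,j). if i = j then d i else 0) *\<^sub>v c) $ i = (\<Sum>k\<in>{0..<n}. (if i = k then d i else 0) * c $ k)"
    using i c by (simp add: scalar_prod_def row_def)
  also have "\<dots> = d i * c $ i" using i
    by (simp add: if_distrib[of "\<lambda>t. t * c $ _"] sum.delta cong: if_cong)
  finally show "(mat n n (\<lambda>(i,j). if i = j then d i else 0) *\<^sub>v c) $ i = vec n (\<lambda>i. d i * c $ i) $ i"
    using i by simp
qed simp

lemma spec_bound:
  fixes S :: "real mat" and L :: "real list" and ws :: "real vec list"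
  assumes S: "S \<in> carrier_mat n n" and lws: "length ws = n" and wsc: "set ws \<subseteq> carrier_vec n"
    and eig: "\<forall>i<n. S *\<^sub>v ws!i = L!i \<cdot>\<^sub>v ws!i"
    and orth: "\<forall>i<n. \<forall>j<n. ws!i \<bullet> ws!j = (if i = j then 1 else 0)"
    and sorted: "sorted (rev L)" and lL: "length L = n"
    and u: "u \<in> carrier_vec n" and Su: "S *\<^sub>v u = u" and u0: "u \<noteq> 0\<^sub>v n"
    and L01: "n > 0 \<Longrightarrow> L!0 \<le> 1"
    and h: "h \<in> carrier_vec n" and uh: "u \<bullet> h = 0"
  shows "(S *\<^sub>v h) \<bullet> (S *\<^sub>v h) \<le> (max \<bar>L!1\<bar> \<bar>L!(n-1)\<bar>)\<^sup>2 * (h \<bullet> h)"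
proof -
  define m where "m = max \<bar>L!1\<bar> \<bar>L!(n-1)\<bar>"
  define W where "W = mat_of_cols n ws"
  have wsi: "\<And>i. i < n \<Longrightarrow> ws ! i \<in> carrier_vec n" using wsc lws by auto
  have W: "W \<in> carrier_mat n n" unfolding W_def using mat_of_cols_carrier(1)[of n ws] lws by simp
  have colW: "\<And>i. i < n \<Longrightarrow> col W i = ws ! i" unfolding W_def using lws wsi by simp
  have WTW: "W\<^sup>T * W = 1\<^sub>m n"
    by (rule eq_matI, insert W colW orth, auto)
  have WWT: "W * W\<^sup>T = 1\<^sub>m n"
    by (rule mat_mult_left_right_inverse[OF _ W WTW], insert W, auto)
  have recon: "\<And>x. x \<in> carrier_vec n \<Longrightarrow> W *\<^sub>v (W\<^sup>T *\<^sub>v x) = x"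
  proof -
    fix x :: "real vec" assume x: "x \<in> carrier_vec n"
    have "W *\<^sub>v (W\<^sup>T *\<^sub>v x) = (W * W\<^sup>T) *\<^sub>v x" using W x by (subst assoc_mult_mat_vec) auto
    then show "W *\<^sub>v (W\<^sup>T *\<^sub>v x) = x" using WWT x by simp
  qed
  have inv: "\<And>x. x \<in> carrier_vec n \<Longrightarrow> W\<^sup>T *\<^sub>v (W *\<^sub>v x) = x"
  proof -
    fix x :: "real vec" assume x: "x \<in> carrier_vec n"
    have "W\<^sup>T *\<^sub>v (W *\<^sub>v x) = (W\<^sup>T * W) *\<^sub>v x" using W x by (subst assoc_mult_mat_vec) auto
    then show "W\<^sup>T *\<^sub>v (W *\<^sub>v x) = x" using WTW x by simp
  qed
  define Dg where "Dg = mat n n (\<lambda>(i,j). if i = j then L!i else 0)"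
  have SW: "S * W = W * Dg"
  proof (rule eq_matI)
    fix a j assume "a < dim_row (W * Dg)" "j < dim_col (W * Dg)"
    hence a: "a < n" and j: "j < n" using W by (auto simp: Dg_def)
    have "(S * W) $$ (a,j) = (S *\<^sub>v ws ! j) $ a" using S W a j colW by simp
    also have "\<dots> = L!j * ws!j $ a" using eig j a wsi[OF j] by simp
    also have "\<dots> = (W * Dg) $$ (a,j)"
    proof -
      have "col W j $ a = W $$ (a,j)" using a j W by simp
      hence "W $$ (a,j) = ws ! j $ a" using colW[OF j] by simp
      then show ?thesis unfolding Dg_def using mult_diag_right[OF W a j, of "\<lambda>i. L!i"] by (simp add: mult.commute)
    qed
    finally show "(S * W) $$ (a,j) = (W * Dg) $$ (a,j)" .
  qed (use S W in \<open>auto simp: Dg_def\<close>)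
  define lam where "lam = (\<lambda>c::real vec. vec n (\<lambda>i. L!i * c $ i))"
  have Slam: "\<And>c. c \<in> carrier_vec n \<Longrightarrow> S *\<^sub>v (W *\<^sub>v c) = W *\<^sub>v lam c"
  proof -
    fix c :: "real vec" assume c: "c \<in> carrier_vec n"
    have "S *\<^sub>v (W *\<^sub>v c) = (S * W) *\<^sub>v c" using S W c by (subst assoc_mult_mat_vec) auto
    also have "\<dots> = W *\<^sub>v (Dg *\<^sub>v c)" unfolding SW using W c by (subst assoc_mult_mat_vec) (auto simp: Dg_def)
    also have "Dg *\<^sub>v c = lam c" unfolding Dg_def lam_def by (rule diag_mult_vec[OF c])
    finally show "S *\<^sub>v (W *\<^sub>v c) = W *\<^sub>v lam c" .
  qed
  define c where "c = W\<^sup>T *\<^sub>v h"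
  define d where "d = W\<^sup>T *\<^sub>v u"
  have c: "c \<in> carrier_vec n" unfolding c_def by (rule mult_mat_vec_carrier[of _ n n], insert W h, auto)
  have d: "d \<in> carrier_vec n" unfolding d_def by (rule mult_mat_vec_carrier[of _ n n], insert W u, auto)
  have lamc: "\<And>x. lam x \<in> carrier_vec n" unfolding lam_def by simp
  have hW: "h = W *\<^sub>v c" unfolding c_def by (rule sym, rule recon[OF h])
  have uW: "u = W *\<^sub>v d" unfolding d_def by (rule sym, rule recon[OF u])
  have "(S *\<^sub>v h) \<bullet> (S *\<^sub>v h) = lam c \<bullet> lam c"
    unfolding hW Slam[OF c] by (rule orth_preserve[OF W WTW lamc lamc])
  also have "\<dots> = (\<Sum>i<n. (L!i * c $ i)\<^sup>2)" unfolding lam_def scalar_prod_def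
    by (simp add: atLeast0LessThan power2_eq_square)
  finally have lhs: "(S *\<^sub>v h) \<bullet> (S *\<^sub>v h) = (\<Sum>i<n. (L!i * c $ i)\<^sup>2)" .
  have "h \<bullet> h = c \<bullet> c" unfolding hW by (rule orth_preserve[OF W WTW c c])
  also have "\<dots> = (\<Sum>i<n. (c $ i)\<^sup>2)" using c unfolding scalar_prod_def
    by (simp add: atLeast0LessThan power2_eq_square)
  finally have rhs: "h \<bullet> h = (\<Sum>i<n. (c $ i)\<^sup>2)" .
  have dc: "(\<Sum>i<n. d $ i * c $ i) = 0"
  proof -
    have "u \<bullet> h = d \<bullet> c" unfolding hW uW by (rule orth_preserve[OF W WTW d c])
    then show ?thesis using uh c unfolding scalar_prod_def by (simp add: atLeast0LessThan)
  qed
  have lamd: "lam d = d"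
  proof -
    have "W *\<^sub>v lam d = W *\<^sub>v d" using Slam[OF d] Su uW by simp
    hence "W\<^sup>T *\<^sub>v (W *\<^sub>v lam d) = W\<^sup>T *\<^sub>v (W *\<^sub>v d)" by simp
    then show ?thesis using inv[OF d] inv[OF lamc] by simp
  qed
  have Ld: "\<And>i. i < n \<Longrightarrow> L!i * d $ i = d $ i"
  proof -
    fix i assume i: "i < n"
    have "lam d $ i = d $ i" using lamd by simp
    then show "L!i * d $ i = d $ i" using i unfolding lam_def by simp
  qed
  have mono: "\<And>i j. i \<le> j \<Longrightarrow> j < n \<Longrightarrow> L!j \<le> L!i"
    using sorted lL by (metis sorted_rev_nth_mono)
  have m0: "m \<ge> 0" unfolding m_def by simp
  have big: "\<And>i. 1 \<le> i \<Longrightarrow> i < n \<Longrightarrow> \<bar>L!i\<bar> \<le> m"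
  proof -
    fix i assume "1 \<le> i" "i < n"
    then have "L!(n-1) \<le> L!i" "L!i \<le> L!1" using mono by auto
    then show "\<bar>L!i\<bar> \<le> m" unfolding m_def by linarith
  qed
  have trm: "\<And>i. i < n \<Longrightarrow> (L!i * c $ i)\<^sup>2 \<le> m\<^sup>2 * (c $ i)\<^sup>2"
  proof -
    fix i assume i: "i < n"
    have "c $ i = 0 \<or> \<bar>L!i\<bar> \<le> m"
    proof (cases "i = 0")
      case False
      then show ?thesis using big i by simp
    next
      case True
      show ?thesis
      proof (cases "L!0 \<le> m")
        case True
        have "L!(n-1) \<le> L!0" using mono i by simp
        then have "\<bar>L!0\<bar> \<le> m" using True unfolding m_def by linarith
        then show ?thesis using \<open>i = 0\<close> by simp
      next
        case False
        have L0: "L!0 \<le> 1" using L01 i by simp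
        have dz: "\<And>k. 1 \<le> k \<Longrightarrow> k < n \<Longrightarrow> d $ k = 0"
        proof -
          fix k assume k: "1 \<le> k" "k < n"
          have "L!k \<noteq> 1" using big[OF k] False L0 by linarith
          then show "d $ k = 0" using Ld[OF k(2)] by (metis mult_cancel_right2)
        qed
        have "(\<Sum>k<n. d $ k * c $ k) = (\<Sum>k\<in>{0}. d $ k * c $ k)"
          by (rule sum.mono_neutral_right) (use i dz in auto)
        hence dc0: "d $ 0 * c $ 0 = 0" using dc by simp
        have "d $ 0 \<noteq> 0"
        proof
          assume "d $ 0 = 0"
          have "d = 0\<^sub>v n"
          proof (rule eq_vecI)
            fix k assume "k < dim_vec (0\<^sub>v n :: real vec)"
            hence k: "k < n" by simp
            show "d $ k = 0\<^sub>v n $ k"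
            proof (cases "k = 0")
              case True then show ?thesis using \<open>d $ 0 = 0\<close> k by simp
            next
              case False then show ?thesis using dz[of k] k by simp
            qed
          qed (use d in simp)
          hence "u = 0\<^sub>v n" unfolding uW using W
            by (intro eq_vecI) (auto simp: scalar_prod_def)
          then show False using u0 by simp
        qed
        then show ?thesis using dc0 \<open>i = 0\<close> by simp
      qed
    qed
    then show "(L!i * c $ i)\<^sup>2 \<le> m\<^sup>2 * (c $ i)\<^sup>2"
    proof
      assume "\<bar>L!i\<bar> \<le> m"
      then have "(L!i)\<^sup>2 \<le> m\<^sup>2" by (metis abs_ge_zero power2_abs power_mono)
      then show ?thesis by (simp add: power_mult_distrib mult_right_mono)
    qed simp
  qed
  have "(\<Sum>i<n. (L!i * c $ i)\<^sup>2) \<le> (\<Sum>i<n. m\<^sup>2 * (c $ i)\<^sup>2)" by (rule sum_mono) (use trm in auto)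
  then show ?thesis unfolding lhs rhs m_def[symmetric] by (simp add: sum_distrib_left)
qed




definition act :: "nat \<Rightarrow> real mat \<Rightarrow> (nat \<Rightarrow> real) \<Rightarrow> nat \<Rightarrow> real" where
  "act n M f = (\<lambda>x. if x < n then (\<Sum>y<n. M $$ (x,y) * f y) else 0)"

definition ipi :: "nat \<Rightarrow> (nat \<Rightarrow> real) \<Rightarrow> (nat \<Rightarrow> real) \<Rightarrow> (nat \<Rightarrow> real) \<Rightarrow> real" where
  "ipi n p f g = (\<Sum>x<n. p x * f x * g x)"

definition stoch :: "nat \<Rightarrow> (nat \<Rightarrow> real) \<Rightarrow> real mat \<Rightarrow> bool" where
  "stoch n p M \<longleftrightarrow> M \<in> carrier_mat n n \<and> (\<forall>x<n. \<forall>y<n. M $$ (x,y) \<ge> 0)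
     \<and> (\<forall>x<n. (\<Sum>y<n. M $$ (x,y)) = 1) \<and> (\<forall>x<n. \<forall>y<n. p x * M $$ (x,y) = p y * M $$ (y,x))"

lemma act_cong: "(\<And>y. y < n \<Longrightarrow> f y = g y) \<Longrightarrow> act n M f = act n M g"
  unfolding act_def by (intro ext) auto

lemma ipi_cong: "(\<And>x. x < n \<Longrightarrow> f x = f' x) \<Longrightarrow> (\<And>x. x < n \<Longrightarrow> g x = g' x) \<Longrightarrow> ipi n p f g = ipi n p f' g'"
  unfolding ipi_def by (intro sum.cong) auto

lemma act_mult:
  assumes X: "X \<in> carrier_mat n n" and Y: "Y \<in> carrier_mat n n"
  shows "act n (X * Y) f = act n X (act n Y f)"
proof (rule ext)
  fix x
  show "act n (X * Y) f x = act n X (act n Y f) x"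
  proof (cases "x < n")
    case True
    have "act n (X * Y) f x = (\<Sum>y<n. (\<Sum>k<n. X $$ (x,k) * Y $$ (k,y)) * f y)"
      using True X Y by (simp add: act_def scalar_prod_def atLeast0LessThan)
    also have "\<dots> = (\<Sum>y<n. \<Sum>k<n. X $$ (x,k) * (Y $$ (k,y) * f y))"
      by (simp add: sum_distrib_right mult.assoc)
    also have "\<dots> = (\<Sum>k<n. \<Sum>y<n. X $$ (x,k) * (Y $$ (k,y) * f y))"
      by (rule sum.swap)
    also have "\<dots> = (\<Sum>k<n. X $$ (x,k) * (\<Sum>y<n. Y $$ (k,y) * f y))"
      by (simp add: sum_distrib_left)
    also have "\<dots> = act n X (act n Y f) x" using True by (simp add: act_def)
    finally show ?thesis .
  qed (simp add: act_def)
qed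

lemma act_one_mat: "act n (1\<^sub>m n) f = (\<lambda>x. if x < n then f x else 0)"
proof (rule ext)
  fix x
  show "act n (1\<^sub>m n) f x = (if x < n then f x else 0)"
  proof (cases "x < n")
    case True
    have "act n (1\<^sub>m n) f x = (\<Sum>y<n. (if x = y then 1 else 0) * f y)"
      unfolding act_def using True by simp
    also have "\<dots> = (\<Sum>y<n. (if x = y then f y else 0))" by (rule sum.cong) auto
    also have "\<dots> = f x" using True by simp
    finally show ?thesis using True by simp
  qed (simp add: act_def)
qed

lemma stoch_one: "stoch n p M \<Longrightarrow> x < n \<Longrightarrow> act n M (\<lambda>_. 1) x = 1"
  unfolding stoch_def act_def by simp

lemma stoch_pres:
  assumes "stoch n p M"
  shows "ipi n p (act n M f) (\<lambda>_. 1) = ipi n p f (\<lambda>_. 1)"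
proof -
  from assms have rs: "\<And>x. x < n \<Longrightarrow> (\<Sum>y<n. M $$ (x,y)) = 1"
    and rev: "\<And>x y. x < n \<Longrightarrow> y < n \<Longrightarrow> p x * M $$ (x,y) = p y * M $$ (y,x)"
    unfolding stoch_def by auto
  have "ipi n p (act n M f) (\<lambda>_. 1) = (\<Sum>x<n. \<Sum>y<n. p x * M $$ (x,y) * f y)"
    unfolding ipi_def act_def by (simp add: sum_distrib_left mult_ac)
  also have "\<dots> = (\<Sum>y<n. \<Sum>x<n. p y * M $$ (y,x) * f y)"
    by (subst sum.swap) (intro sum.cong refl, simp add: rev)
  also have "\<dots> = (\<Sum>y<n. p y * f y * (\<Sum>x<n. M $$ (y,x)))"
    by (simp add: sum_distrib_left mult_ac)
  also have "\<dots> = ipi n p f (\<lambda>_. 1)" unfolding ipi_def by (simp add: rs)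
  finally show ?thesis .
qed

lemma stoch_contr:
  assumes "stoch n p M" and pp: "\<And>x. x < n \<Longrightarrow> p x \<ge> 0"
  shows "ipi n p (act n M f) (act n M f) \<le> ipi n p f f"
proof -
  from assms have rs: "\<And>x. x < n \<Longrightarrow> (\<Sum>y<n. M $$ (x,y)) = 1"
    and rev: "\<And>x y. x < n \<Longrightarrow> y < n \<Longrightarrow> p x * M $$ (x,y) = p y * M $$ (y,x)"
    and nn: "\<And>x y. x < n \<Longrightarrow> y < n \<Longrightarrow> M $$ (x,y) \<ge> 0"
    unfolding stoch_def by auto
  have jen: "(act n M f x)\<^sup>2 \<le> (\<Sum>y<n. M $$ (x,y) * (f y)\<^sup>2)" if x: "x < n" for x
  proof -
    define mu where "mu = act n M f x"
    have mu: "mu = (\<Sum>y<n. M $$ (x,y) * f y)" using x by (simp add: mu_def act_def)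
    have "0 \<le> (\<Sum>y<n. M $$ (x,y) * (f y - mu)\<^sup>2)"
      by (intro sum_nonneg mult_nonneg_nonneg) (auto simp: nn x)
    also have "\<dots> = (\<Sum>y<n. M $$ (x,y) * (f y)\<^sup>2) - 2 * mu * (\<Sum>y<n. M $$ (x,y) * f y)
        + mu\<^sup>2 * (\<Sum>y<n. M $$ (x,y))"
      by (simp add: power2_diff sum_distrib_left sum_distrib_right sum_subtractf sum.distrib algebra_simps)
    also have "\<dots> = (\<Sum>y<n. M $$ (x,y) * (f y)\<^sup>2) - mu\<^sup>2"
      unfolding mu[symmetric] rs[OF x] by (simp add: power2_eq_square)
    finally show ?thesis unfolding mu_def by simp
  qed
  have "ipi n p (act n M f) (act n M f) = (\<Sum>x<n. p x * (act n M f x)\<^sup>2)"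
    unfolding ipi_def by (simp add: power2_eq_square mult_ac)
  also have "\<dots> \<le> (\<Sum>x<n. p x * (\<Sum>y<n. M $$ (x,y) * (f y)\<^sup>2))"
    by (intro sum_mono mult_left_mono jen pp) auto
  also have "\<dots> = (\<Sum>x<n. \<Sum>y<n. p x * M $$ (x,y) * (f y)\<^sup>2)"
    by (simp add: sum_distrib_left mult_ac)
  also have "\<dots> = (\<Sum>y<n. \<Sum>x<n. p y * M $$ (y,x) * (f y)\<^sup>2)"
    by (subst sum.swap) (intro sum.cong refl, simp add: rev)
  also have "\<dots> = (\<Sum>y<n. p y * (f y)\<^sup>2 * (\<Sum>x<n. M $$ (y,x)))"
    by (simp add: sum_distrib_left mult_ac)
  also have "\<dots> = ipi n p f f" unfolding ipi_def by (simp add: rs power2_eq_square mult_ac)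
  finally show ?thesis .
qed

lemma ipi_cs:
  assumes pp: "\<And>x. x < n \<Longrightarrow> p x > 0"
  shows "(ipi n p u w)\<^sup>2 \<le> ipi n p u u * ipi n p w w"
proof -
  define U where "U = ipi n p u u"
  define W where "W = ipi n p w w"
  define X where "X = ipi n p u w"
  have exp: "ipi n p (\<lambda>x. u x - t * w x) (\<lambda>x. u x - t * w x) = U - 2 * t * X + t\<^sup>2 * W" for t
    unfolding U_def W_def X_def ipi_def
    by (simp add: sum_subtractf sum.distrib sum_distrib_left algebra_simps power2_eq_square)
  have nonneg: "ipi n p g g \<ge> 0" for g
    unfolding ipi_def using pp by (intro sum_nonneg) (simp add: mult.assoc less_imp_le)
  show ?thesis
  proof (cases "W = 0")
    case True
    have "\<forall>x\<in>{..<n}. p x * w x * w x = 0"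
      using True unfolding W_def ipi_def
      by (subst sum_nonneg_eq_0_iff[symmetric]) (use pp in \<open>auto simp: mult.assoc less_imp_le\<close>)
    hence "\<And>x. x < n \<Longrightarrow> w x = 0" using pp by (metis lessThan_iff mult_eq_0_iff order_less_irrefl)
    hence "X = 0" unfolding X_def ipi_def by simp
    then show ?thesis using True by (simp add: X_def W_def)
  next
    case False
    hence Wp: "W > 0" using nonneg[of w] unfolding W_def by simp
    have "0 \<le> U - 2 * (X / W) * X + (X / W)\<^sup>2 * W" using nonneg[of "\<lambda>x. u x - (X/W) * w x"] exp[of "X/W"]
      by linarith
    also have "\<dots> = U - X\<^sup>2 / W" using Wp by (simp add: field_simps power2_eq_square)
    finally have "X\<^sup>2 / W \<le> U" by simp
    then show ?thesis using Wp unfolding U_def[symmetric] W_def[symmetric] X_def[symmetric]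
      by (simp add: field_simps)
  qed
qed

lemma ipi_tri:
  assumes pp: "\<And>x. x < n \<Longrightarrow> p x > 0"
    and a: "a \<ge> 0" and b: "b \<ge> 0" and F: "F \<ge> 0"
    and U: "ipi n p u u \<le> a\<^sup>2 * F" and W: "ipi n p w w \<le> b\<^sup>2 * F"
  shows "ipi n p (\<lambda>x. u x + w x) (\<lambda>x. u x + w x) \<le> (a + b)\<^sup>2 * F"
proof -
  have nonneg: "ipi n p g g \<ge> 0" for g
    unfolding ipi_def using pp by (intro sum_nonneg) (simp add: mult.assoc less_imp_le)
  have "(ipi n p u w)\<^sup>2 \<le> ipi n p u u * ipi n p w w" by (rule ipi_cs[OF pp])
  also have "\<dots> \<le> (a\<^sup>2 * F) * (b\<^sup>2 * F)" by (intro mult_mono U W nonneg) (use F in auto)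
  also have "\<dots> = (a * b * F)\<^sup>2" by (simp add: power2_eq_square)
  finally have "\<bar>ipi n p u w\<bar> \<le> a * b * F" using a b F
    by (metis abs_le_square_iff abs_of_nonneg mult_nonneg_nonneg)
  hence X: "ipi n p u w \<le> a * b * F" by simp
  have "ipi n p (\<lambda>x. u x + w x) (\<lambda>x. u x + w x) = ipi n p u u + 2 * ipi n p u w + ipi n p w w"
    unfolding ipi_def by (simp add: sum.distrib sum_distrib_left algebra_simps)
  also have "\<dots> \<le> a\<^sup>2 * F + 2 * (a * b * F) + b\<^sup>2 * F" using U W X by simp
  also have "\<dots> = (a + b)\<^sup>2 * F" by (simp add: power2_eq_square algebra_simps)
  finally show ?thesis .
qed




lemma block_props:
  assumes P: "partition_on {..<n} Os" and x: "x < n"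
  shows "block_of Os x \<in> Os" "x \<in> block_of Os x" "block_of Os x \<subseteq> {..<n}"
    "\<And>y. y \<in> block_of Os x \<Longrightarrow> block_of Os y = block_of Os x"
proof -
  have cov: "\<Union>Os = {..<n}" using partition_onD1[OF P] by simp
  have dj: "\<And>A B. A \<in> Os \<Longrightarrow> B \<in> Os \<Longrightarrow> A \<noteq> B \<Longrightarrow> A \<inter> B = {}"
    using partition_onD2[OF P] unfolding disjoint_def by blast
  have uniq: "\<And>z. z < n \<Longrightarrow> \<exists>!B. B \<in> Os \<and> z \<in> B"
  proof -
    fix z assume "z < n"
    then obtain B where "B \<in> Os" "z \<in> B" using cov by blast
    then show "\<exists>!B. B \<in> Os \<and> z \<in> B" using dj by blast
  qed
  have bo: "\<And>z. z < n \<Longrightarrow> block_of Os z \<in> Os \<and> z \<in> block_of Os z"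
    unfolding block_of_def by (rule theI') (rule uniq)
  show "block_of Os x \<in> Os" "x \<in> block_of Os x" using bo[OF x] by auto
  show "block_of Os x \<subseteq> {..<n}" using bo[OF x] cov by blast
  fix y assume y: "y \<in> block_of Os x"
  hence yn: "y < n" using bo[OF x] cov by blast
  have "block_of Os x \<in> Os \<and> y \<in> block_of Os x" using bo[OF x] y by simp
  moreover have "block_of Os y \<in> Os \<and> y \<in> block_of Os y" using bo[OF yn] .
  ultimately show "block_of Os y = block_of Os x" using uniq[OF yn] by blast
qed

lemma gibbs_stoch:
  assumes P: "partition_on {..<n} Os" and pp: "\<And>x. x < n \<Longrightarrow> p x > 0"
  shows "stoch n p (gibbs_kernel n p Os)"
proof -
  let ?G = "gibbs_kernel n p Os"
  let ?B = "block_of Os"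
  have fin: "\<And>x. x < n \<Longrightarrow> finite (?B x)" using block_props(3)[OF P] finite_subset by blast
  have spos: "\<And>x. x < n \<Longrightarrow> (\<Sum>z\<in>?B x. p z) > 0"
  proof -
    fix x assume x: "x < n"
    have nn: "\<And>i. i \<in> ?B x \<Longrightarrow> 0 \<le> p i"
    proof -
      fix i assume "i \<in> ?B x"
      hence "i < n" using block_props(3)[OF P x] by auto
      then show "0 \<le> p i" using pp less_imp_le by blast
    qed
    show "(\<Sum>z\<in>?B x. p z) > 0"
      by (rule sum_pos2[OF fin[OF x] block_props(2)[OF P x]]) (use pp x nn in auto)
  qed
  have Gxy: "\<And>x y. x < n \<Longrightarrow> y < n \<Longrightarrow> ?G $$ (x,y) = (if y \<in> ?B x then p y / (\<Sum>z\<in>?B x. p z) else 0)"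
    unfolding gibbs_kernel_def by simp
  have carr: "?G \<in> carrier_mat n n" unfolding gibbs_kernel_def by simp
  have nn: "\<forall>x<n. \<forall>y<n. ?G $$ (x,y) \<ge> 0"
    using Gxy spos pp by (auto simp: less_imp_le)
  have rs: "\<forall>x<n. (\<Sum>y<n. ?G $$ (x,y)) = 1"
  proof (intro allI impI)
    fix x assume x: "x < n"
    have "(\<Sum>y<n. ?G $$ (x,y)) = (\<Sum>y<n. if y \<in> ?B x then p y / (\<Sum>z\<in>?B x. p z) else 0)"
      using Gxy x by simp
    also have "\<dots> = (\<Sum>y\<in>{..<n} \<inter> ?B x. p y / (\<Sum>z\<in>?B x. p z))"
      by (rule sum.inter_restrict[symmetric]) simp
    also have "{..<n} \<inter> ?B x = ?B x" using block_props(3)[OF P x] by blast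
    also have "(\<Sum>y\<in>?B x. p y / (\<Sum>z\<in>?B x. p z)) = 1"
      using spos[OF x] by (simp add: sum_divide_distrib[symmetric])
    finally show "(\<Sum>y<n. ?G $$ (x,y)) = 1" .
  qed
  have rev: "\<forall>x<n. \<forall>y<n. p x * ?G $$ (x,y) = p y * ?G $$ (y,x)"
  proof (intro allI impI)
    fix x y assume x: "x < n" and y: "y < n"
    show "p x * ?G $$ (x,y) = p y * ?G $$ (y,x)"
    proof (cases "y \<in> ?B x")
      case True
      have "?B y = ?B x" using block_props(4)[OF P x True] .
      moreover have "x \<in> ?B y" using calculation block_props(2)[OF P x] by simp
      ultimately show ?thesis using Gxy x y True by simp
    next
      case False
      have "x \<notin> ?B y"
      proof
        assume "x \<in> ?B y"
        hence "?B x = ?B y" using block_props(4)[OF P y] by simp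
        thus False using False block_props(2)[OF P y] by simp
      qed
      then show ?thesis using Gxy x y False by simp
    qed
  qed
  show ?thesis unfolding stoch_def using carr nn rs rev by blast
qed

lemma stoch_comb:
  assumes "stoch n p P" "stoch n p G" "0 \<le> a" "a \<le> 1"
  shows "stoch n p (a \<cdot>\<^sub>m P + (1 - a) \<cdot>\<^sub>m G)"
proof -
  have P: "P \<in> carrier_mat n n" and G: "G \<in> carrier_mat n n" using assms unfolding stoch_def by auto
  have e: "\<And>x y. x < n \<Longrightarrow> y < n \<Longrightarrow> (a \<cdot>\<^sub>m P + (1 - a) \<cdot>\<^sub>m G) $$ (x,y) = a * P $$ (x,y) + (1 - a) * G $$ (x,y)"
    using P G by simp
  have c: "a \<cdot>\<^sub>m P + (1 - a) \<cdot>\<^sub>m G \<in> carrier_mat n n" using P G by simp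
  show ?thesis unfolding stoch_def
  proof (intro conjI allI impI c)
    fix x y assume "x < n" "y < n"
    then show "0 \<le> (a \<cdot>\<^sub>m P + (1 - a) \<cdot>\<^sub>m G) $$ (x, y)" using e assms unfolding stoch_def by simp
  next
    fix x y assume x: "x < n" and y: "y < n"
    have h1: "p x * P $$ (x,y) = p y * P $$ (y,x)" and h2: "p x * G $$ (x,y) = p y * G $$ (y,x)"
      using assms(1,2) x y unfolding stoch_def by auto
    have "p x * (a \<cdot>\<^sub>m P + (1 - a) \<cdot>\<^sub>m G) $$ (x, y) = a * (p x * P $$ (x,y)) + (1 - a) * (p x * G $$ (x,y))"
      unfolding e[OF x y] by (simp add: algebra_simps)
    also have "\<dots> = a * (p y * P $$ (y,x)) + (1 - a) * (p y * G $$ (y,x))" unfolding h1 h2 ..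
    also have "\<dots> = p y * (a \<cdot>\<^sub>m P + (1 - a) \<cdot>\<^sub>m G) $$ (y, x)"
      unfolding e[OF y x] by (simp add: algebra_simps)
    finally show "p x * (a \<cdot>\<^sub>m P + (1 - a) \<cdot>\<^sub>m G) $$ (x, y) = p y * (a \<cdot>\<^sub>m P + (1 - a) \<cdot>\<^sub>m G) $$ (y, x)" .
  next
    fix x assume x: "x < n"
    have "(\<Sum>y<n. (a \<cdot>\<^sub>m P + (1 - a) \<cdot>\<^sub>m G) $$ (x, y)) = a * (\<Sum>y<n. P $$ (x,y)) + (1 - a) * (\<Sum>y<n. G $$ (x,y))"
      using e x by (simp add: sum.distrib sum_distrib_left)
    then show "(\<Sum>y<n. (a \<cdot>\<^sub>m P + (1 - a) \<cdot>\<^sub>m G) $$ (x, y)) = 1" using assms x unfolding stoch_def by simp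
  qed
qed




lemma eig_le_one:
  assumes st: "stoch n p P" and pp: "\<And>x. x < n \<Longrightarrow> p x > 0"
    and w: "w \<in> carrier_vec n" and wx: "x1 < n" "w $ x1 \<noteq> 0"
    and Sw: "mat n n (\<lambda>(x,y). sqrt (p x) * P $$ (x,y) / sqrt (p y)) *\<^sub>v w = lam \<cdot>\<^sub>v w"
  shows "\<bar>lam\<bar> \<le> 1"
proof -
  have P: "P \<in> carrier_mat n n" and nn: "\<And>x y. x < n \<Longrightarrow> y < n \<Longrightarrow> P $$ (x,y) \<ge> 0"
    and rs: "\<And>x. x < n \<Longrightarrow> (\<Sum>y<n. P $$ (x,y)) = 1" using st unfolding stoch_def by auto
  define v where "v = (\<lambda>x. w $ x / sqrt (p x))"
  have sp: "\<And>x. x < n \<Longrightarrow> sqrt (p x) > 0" using pp by simp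
  have ev: "(\<Sum>y<n. P $$ (x,y) * v y) = lam * v x" if x: "x < n" for x
  proof -
    have "(mat n n (\<lambda>(x,y). sqrt (p x) * P $$ (x,y) / sqrt (p y)) *\<^sub>v w) $ x
        = (\<Sum>y<n. sqrt (p x) * P $$ (x,y) / sqrt (p y) * w $ y)"
      using x w by (simp add: scalar_prod_def row_def atLeast0LessThan)
    also have "\<dots> = sqrt (p x) * (\<Sum>y<n. P $$ (x,y) * v y)"
      unfolding v_def sum_distrib_left by (intro sum.cong refl) simp
    finally have "sqrt (p x) * (\<Sum>y<n. P $$ (x,y) * v y) = lam * w $ x" using Sw x w by simp
    also have "\<dots> = sqrt (p x) * (lam * v x)" unfolding v_def using sp[OF x] by simp
    finally show ?thesis using sp[OF x] by simp
  qed
  define Mx where "Mx = Max ((\<lambda>x. \<bar>v x\<bar>) ` {..<n})"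
  have ne: "{..<n} \<noteq> {}" using wx by auto
  have "Mx \<in> (\<lambda>x. \<bar>v x\<bar>) ` {..<n}" unfolding Mx_def by (rule Max_in) (use ne in auto)
  then obtain x0 where x0: "x0 < n" "\<bar>v x0\<bar> = Mx" by auto
  have ge: "\<And>y. y < n \<Longrightarrow> \<bar>v y\<bar> \<le> Mx" unfolding Mx_def by (rule Max_ge) auto
  have "v x1 \<noteq> 0" using wx sp[OF wx(1)] unfolding v_def by simp
  hence Mpos: "Mx > 0" using ge[OF wx(1)] by linarith
  have "\<bar>lam\<bar> * Mx = \<bar>\<Sum>y<n. P $$ (x0,y) * v y\<bar>" using ev[OF x0(1)] x0(2) by (simp add: abs_mult)
  also have "\<dots> \<le> (\<Sum>y<n. \<bar>P $$ (x0,y) * v y\<bar>)" by (rule sum_abs)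
  also have "\<dots> \<le> (\<Sum>y<n. P $$ (x0,y) * Mx)"
    by (intro sum_mono) (simp add: abs_mult nn x0(1) ge mult_left_mono)
  also have "\<dots> = Mx" using rs[OF x0(1)] by (simp add: sum_distrib_right[symmetric])
  finally show ?thesis using Mpos by simp
qed

lemma P_spec:
  assumes pp: "\<And>x. x < n \<Longrightarrow> p x > 0" and psum: "(\<Sum>x<n. p x) = 1"
    and st: "stoch n p P" and f: "ipi n p f (\<lambda>_. 1) = 0"
  shows "ipi n p (act n P f) (act n P f) \<le> (max \<bar>eig_list P ! 1\<bar> \<bar>eig_list P ! (n-1)\<bar>)\<^sup>2 * ipi n p f f"
proof -
  have P: "P \<in> carrier_mat n n" and rs: "\<And>x. x < n \<Longrightarrow> (\<Sum>y<n. P $$ (x,y)) = 1"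
    and rev: "\<And>x y. x < n \<Longrightarrow> y < n \<Longrightarrow> p x * P $$ (x,y) = p y * P $$ (y,x)"
    using st unfolding stoch_def by auto
  define sp where "sp = (\<lambda>x. sqrt (p x))"
  have sp: "\<And>x. x < n \<Longrightarrow> sp x > 0" using pp by (simp add: sp_def)
  have spnz: "\<And>x. x < n \<Longrightarrow> sp x \<noteq> 0" using sp by (metis less_irrefl)
  have sp2: "\<And>x. x < n \<Longrightarrow> sp x * sp x = p x" using pp by (simp add: sp_def less_imp_le)
  define S where "S = mat n n (\<lambda>(x,y). sp x * P $$ (x,y) / sp y)"
  have S: "S \<in> carrier_mat n n" unfolding S_def by simp
  have Sij: "\<And>i j. i < n \<Longrightarrow> j < n \<Longrightarrow> S $$ (i,j) = sp i * P $$ (i,j) / sp j" unfolding S_def by simp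
  have symS: "S\<^sup>T = S"
  proof (rule eq_matI)
    fix i j assume "i < dim_row S" "j < dim_col S"
    hence i: "i < n" and j: "j < n" using S by auto
    have "S\<^sup>T $$ (i,j) = sp j * P $$ (j,i) / sp i" using i j S Sij by simp
    also have "\<dots> = (sp j * sp j * P $$ (j,i)) / (sp i * sp j)" using sp[OF i] sp[OF j] by (simp add: field_simps)
    also have "\<dots> = (sp i * sp i * P $$ (i,j)) / (sp i * sp j)" using sp2 i j rev[OF i j] by simp
    also have "\<dots> = S $$ (i,j)" using Sij[OF i j] sp[OF i] sp[OF j] by (simp add: field_simps)
    finally show "S\<^sup>T $$ (i,j) = S $$ (i,j)" .
  qed (use S in auto)
  define D where "D = mat n n (\<lambda>(i,j). if i = j then sp i else 0)"
  define Di where "Di = mat n n (\<lambda>(i,j). if i = j then 1 / sp i else 0)"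
  have D: "D \<in> carrier_mat n n" and Di: "Di \<in> carrier_mat n n" unfolding D_def Di_def by auto
  have DDi: "D * Di = 1\<^sub>m n"
  proof (rule eq_matI)
    fix i j assume "i < dim_row (1\<^sub>m n :: real mat)" "j < dim_col (1\<^sub>m n :: real mat)"
    hence i: "i < n" and j: "j < n" by auto
    show "(D * Di) $$ (i,j) = 1\<^sub>m n $$ (i,j)"
      unfolding Di_def using mult_diag_right[OF D i j, of "\<lambda>i. 1 / sp i"] i j sp[OF i] sp[OF j] by (simp add: D_def)
  qed (use D Di in auto)
  have DiD: "Di * D = 1\<^sub>m n"
  proof (rule eq_matI)
    fix i j assume "i < dim_row (1\<^sub>m n :: real mat)" "j < dim_col (1\<^sub>m n :: real mat)"
    hence i: "i < n" and j: "j < n" by auto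
    show "(Di * D) $$ (i,j) = 1\<^sub>m n $$ (i,j)"
      unfolding D_def using mult_diag_right[OF Di i j, of "\<lambda>i. sp i"] i j sp[OF i] sp[OF j] by (simp add: Di_def)
  qed (use D Di in auto)
  have SDPD: "S = D * P * Di"
  proof (rule eq_matI)
    fix i j assume "i < dim_row (D * P * Di)" "j < dim_col (D * P * Di)"
    hence i: "i < n" and j: "j < n" using D Di by auto
    have DP: "D * P \<in> carrier_mat n n" using D P by simp
    have "(D * P * Di) $$ (i,j) = (D * P) $$ (i,j) * (1 / sp j)"
      unfolding Di_def by (rule mult_diag_right[OF DP i j])
    also have "(D * P) $$ (i,j) = sp i * P $$ (i,j)"
      unfolding D_def by (rule mult_diag_left[OF P i j])
    finally show "S $$ (i,j) = (D * P * Di) $$ (i,j)" using Sij[OF i j] by simp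
  qed (use D Di S in auto)
  have "similar_mat S P"
    by (rule similar_matI[where n=n and P=D and Q=Di], insert S P D Di DDi DiD SDPD, auto)
  hence cpS: "char_poly S = char_poly P" by (rule char_poly_similar)
  obtain es where "char_poly S = (\<Prod>e\<leftarrow>es. [:-e,1:])" using real_split[OF S symS] by blast
  hence "char_poly P = (\<Prod>e\<leftarrow>es. [:-e,1:])" using cpS by simp
  from eig_list_props[OF this] have sortL: "sorted (rev (eig_list P))"
    and cpL: "char_poly P = (\<Prod>e\<leftarrow>eig_list P. [:-e,1:])" by auto
  define L where "L = eig_list P"
  have lL: "length L = n"
    using degree_monic_char_poly[OF P] degree_linear_factors[of uminus L] cpL unfolding L_def by simp
  have cpSL: "char_poly S = (\<Prod>e\<leftarrow>L. [:-e,1:])" using cpS cpL unfolding L_def by simp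
  obtain ws where ws: "length ws = n" "set ws \<subseteq> carrier_vec n" "\<forall>i<n. S *\<^sub>v ws!i = L!i \<cdot>\<^sub>v ws!i"
    "\<forall>i<n. \<forall>j<n. ws!i \<bullet> ws!j = (if i = j then 1 else 0)"
    using spectral_real[OF S symS cpSL] by blast
  have n0: "n > 0" using psum by (cases n) auto
  define u where "u = vec n sp"
  have u: "u \<in> carrier_vec n" unfolding u_def by simp
  have Su: "S *\<^sub>v u = u"
  proof (rule eq_vecI)
    fix x assume "x < dim_vec u"
    hence x: "x < n" unfolding u_def by simp
    have "(S *\<^sub>v u) $ x = (\<Sum>y<n. sp x * P $$ (x,y) / sp y * sp y)"
      using x S unfolding u_def S_def by (simp add: scalar_prod_def row_def atLeast0LessThan)
    also have "\<dots> = sp x * (\<Sum>y<n. P $$ (x,y))" unfolding sum_distrib_left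
      by (intro sum.cong refl) (simp add: spnz)
    finally show "(S *\<^sub>v u) $ x = u $ x" using rs[OF x] x unfolding u_def by simp
  qed (use S u in simp)
  have u0: "u \<noteq> 0\<^sub>v n"
  proof
    assume "u = 0\<^sub>v n"
    hence "u $ 0 = 0" using n0 by simp
    thus False using sp[OF n0] unfolding u_def using n0 by simp
  qed
  have L01: "L!0 \<le> 1"
  proof -
    have w0: "ws ! 0 \<in> carrier_vec n" using ws n0 by auto
    have "\<exists>x1<n. ws ! 0 $ x1 \<noteq> 0"
    proof (rule ccontr)
      assume "\<not> ?thesis"
      hence "ws ! 0 \<bullet> ws ! 0 = 0" using w0 by (simp add: scalar_prod_def)
      thus False using ws(4) n0 by simp
    qed
    then obtain x1 where "x1 < n" "ws ! 0 $ x1 \<noteq> 0" by blast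
    moreover have "mat n n (\<lambda>(x,y). sqrt (p x) * P $$ (x,y) / sqrt (p y)) *\<^sub>v ws ! 0 = L!0 \<cdot>\<^sub>v ws ! 0"
      using ws(3) n0 unfolding S_def sp_def by simp
    ultimately have "\<bar>L!0\<bar> \<le> 1" using eig_le_one[OF st pp w0] by blast
    then show ?thesis by simp
  qed
  define h where "h = vec n (\<lambda>x. sp x * f x)"
  have h: "h \<in> carrier_vec n" unfolding h_def by simp
  have uh: "u \<bullet> h = 0"
  proof -
    have "u \<bullet> h = (\<Sum>x<n. sp x * (sp x * f x))" unfolding u_def h_def scalar_prod_def
      by (simp add: atLeast0LessThan)
    also have "\<dots> = ipi n p f (\<lambda>_. 1)" unfolding ipi_def
      by (intro sum.cong refl) (simp add: sp2 mult.assoc[symmetric])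
    finally show ?thesis using f by simp
  qed
  have Sh: "S *\<^sub>v h = vec n (\<lambda>x. sp x * act n P f x)"
  proof (rule eq_vecI)
    fix x assume "x < dim_vec (vec n (\<lambda>x. sp x * act n P f x))"
    hence x: "x < n" by simp
    have "(S *\<^sub>v h) $ x = (\<Sum>y<n. sp x * P $$ (x,y) / sp y * (sp y * f y))"
      using x S unfolding h_def S_def by (simp add: scalar_prod_def row_def atLeast0LessThan)
    also have "\<dots> = sp x * (\<Sum>y<n. P $$ (x,y) * f y)" unfolding sum_distrib_left
      by (intro sum.cong refl) (simp add: spnz)
    also have "\<dots> = sp x * act n P f x" using x by (simp add: act_def)
    finally show "(S *\<^sub>v h) $ x = vec n (\<lambda>x. sp x * act n P f x) $ x" using x by simp
  qed (use S h in simp)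
  have lhs: "(S *\<^sub>v h) \<bullet> (S *\<^sub>v h) = ipi n p (act n P f) (act n P f)"
    unfolding Sh ipi_def scalar_prod_def
    by (simp add: atLeast0LessThan, intro sum.cong refl) (simp add: sp2 mult_ac flip: sp2)
  have rhs: "h \<bullet> h = ipi n p f f"
    unfolding h_def ipi_def scalar_prod_def
    by (simp add: atLeast0LessThan, intro sum.cong refl) (simp add: mult_ac flip: sp2)
  have "(S *\<^sub>v h) \<bullet> (S *\<^sub>v h) \<le> (max \<bar>L!1\<bar> \<bar>L!(n-1)\<bar>)\<^sup>2 * (h \<bullet> h)"
    by (rule spec_bound[OF S ws(1,2,3,4) sortL[folded L_def] lL u Su u0 _ h uh]) (use L01 in simp)
  then show ?thesis unfolding lhs rhs L_def .
qed




lemma ipi_scale: "ipi n p (\<lambda>x. k * g x) (\<lambda>x. k * g x) = k\<^sup>2 * ipi n p g g"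
  unfolding ipi_def by (simp add: sum_distrib_left power2_eq_square mult_ac)

lemma ipi_nonneg: "(\<And>x. x < n \<Longrightarrow> p x > 0) \<Longrightarrow> ipi n p g g \<ge> 0"
  unfolding ipi_def by (intro sum_nonneg) (simp add: mult.assoc less_imp_le)

lemma A_step:
  assumes pp: "\<And>x. x < n \<Longrightarrow> p x > 0" and psum: "(\<Sum>x<n. p x) = 1"
    and stP: "stoch n p P" and stG: "stoch n p G" and a0: "0 \<le> a" and a1: "a \<le> 1"
    and f: "ipi n p f (\<lambda>_. 1) = 0"
  shows "ipi n p (act n (a \<cdot>\<^sub>m P + (1 - a) \<cdot>\<^sub>m G) f) (act n (a \<cdot>\<^sub>m P + (1 - a) \<cdot>\<^sub>m G) f)
    \<le> (a * max \<bar>eig_list P ! 1\<bar> \<bar>eig_list P ! (n-1)\<bar> + (1 - a))\<^sup>2 * ipi n p f f"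
proof -
  define m where "m = max \<bar>eig_list P ! 1\<bar> \<bar>eig_list P ! (n-1)\<bar>"
  have P: "P \<in> carrier_mat n n" and G: "G \<in> carrier_mat n n" using stP stG unfolding stoch_def by auto
  have split: "act n (a \<cdot>\<^sub>m P + (1 - a) \<cdot>\<^sub>m G) f = (\<lambda>x. a * act n P f x + (1 - a) * act n G f x)"
  proof (rule ext)
    fix x show "act n (a \<cdot>\<^sub>m P + (1 - a) \<cdot>\<^sub>m G) f x = a * act n P f x + (1 - a) * act n G f x"
    proof (cases "x < n")
      case True
      have "act n (a \<cdot>\<^sub>m P + (1 - a) \<cdot>\<^sub>m G) f x = (\<Sum>y<n. (a * P $$ (x,y) + (1 - a) * G $$ (x,y)) * f y)"
        unfolding act_def using True P G by (auto intro!: sum.cong)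
      also have "\<dots> = a * act n P f x + (1 - a) * act n G f x"
        unfolding act_def using True by (simp add: distrib_right mult.assoc sum.distrib sum_distrib_left[symmetric])
      finally show ?thesis .
    qed (simp add: act_def)
  qed
  have F: "ipi n p f f \<ge> 0" by (rule ipi_nonneg[OF pp])
  have U: "ipi n p (\<lambda>x. a * act n P f x) (\<lambda>x. a * act n P f x) \<le> (a * m)\<^sup>2 * ipi n p f f"
  proof -
    have "ipi n p (act n P f) (act n P f) \<le> m\<^sup>2 * ipi n p f f"
      unfolding m_def by (rule P_spec[OF pp psum stP f])
    hence "a\<^sup>2 * ipi n p (act n P f) (act n P f) \<le> a\<^sup>2 * (m\<^sup>2 * ipi n p f f)"
      by (rule mult_left_mono) simp
    then show ?thesis unfolding ipi_scale by (simp add: power_mult_distrib mult_ac)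
  qed
  have W: "ipi n p (\<lambda>x. (1 - a) * act n G f x) (\<lambda>x. (1 - a) * act n G f x) \<le> (1 - a)\<^sup>2 * ipi n p f f"
  proof -
    have "ipi n p (act n G f) (act n G f) \<le> ipi n p f f"
      by (rule stoch_contr[OF stG]) (use pp less_imp_le in blast)
    hence "(1 - a)\<^sup>2 * ipi n p (act n G f) (act n G f) \<le> (1 - a)\<^sup>2 * ipi n p f f"
      by (rule mult_left_mono) simp
    then show ?thesis unfolding ipi_scale .
  qed
  have "ipi n p (\<lambda>x. a * act n P f x + (1 - a) * act n G f x) (\<lambda>x. a * act n P f x + (1 - a) * act n G f x)
      \<le> (a * m + (1 - a))\<^sup>2 * ipi n p f f"
    by (rule ipi_tri[OF pp _ _ F U W]) (use a0 a1 m_def in auto)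
  then show ?thesis unfolding split m_def .
qed

lemma pow_one:
  assumes st: "stoch n p A"
  shows "y < n \<Longrightarrow> act n (A ^\<^sub>m k) (\<lambda>_. 1) y = 1"
proof (induction k arbitrary: y)
  case 0
  have "dim_row A = n" using st unfolding stoch_def by auto
  hence "A ^\<^sub>m 0 = 1\<^sub>m n" by simp
  then show ?case using 0 by (simp add: act_one_mat)
next
  case (Suc k)
  have A: "A \<in> carrier_mat n n" using st unfolding stoch_def by simp
  have "act n (A ^\<^sub>m Suc k) (\<lambda>_. 1) = act n (A ^\<^sub>m k) (act n A (\<lambda>_. 1))"
    using A by (simp add: act_mult)
  also have "\<dots> = act n (A ^\<^sub>m k) (\<lambda>_. 1)" by (rule act_cong) (use stoch_one[OF st] in auto)
  finally show ?case using Suc by simp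
qed

lemma pow_bound:
  assumes st: "stoch n p A" and c2: "c2 \<ge> 0"
    and step: "\<And>f. ipi n p f (\<lambda>_. 1) = 0 \<Longrightarrow> ipi n p (act n A f) (act n A f) \<le> c2 * ipi n p f f"
  shows "ipi n p f (\<lambda>_. 1) = 0 \<Longrightarrow> ipi n p (act n (A ^\<^sub>m k) f) (\<lambda>_. 1) = 0 \<and>
     ipi n p (act n (A ^\<^sub>m k) f) (act n (A ^\<^sub>m k) f) \<le> c2 ^ k * ipi n p f f"
proof (induction k arbitrary: f)
  case 0
  have "dim_row A = n" using st unfolding stoch_def by auto
  hence "A ^\<^sub>m 0 = 1\<^sub>m n" by simp
  hence e: "act n (A ^\<^sub>m 0) f = (\<lambda>x. if x < n then f x else 0)" by (simp add: act_one_mat)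
  have "ipi n p (act n (A ^\<^sub>m 0) f) (\<lambda>_. 1) = ipi n p f (\<lambda>_. 1)" unfolding e by (rule ipi_cong) auto
  moreover have "ipi n p (act n (A ^\<^sub>m 0) f) (act n (A ^\<^sub>m 0) f) = ipi n p f f" unfolding e by (rule ipi_cong) auto
  ultimately show ?case using 0 by simp
next
  case (Suc k)
  have A: "A \<in> carrier_mat n n" using st unfolding stoch_def by simp
  have e: "act n (A ^\<^sub>m Suc k) f = act n (A ^\<^sub>m k) (act n A f)" using A by (simp add: act_mult)
  have g: "ipi n p (act n A f) (\<lambda>_. 1) = 0" using stoch_pres[OF st] Suc.prems by simp
  from Suc.IH[OF g] have ih1: "ipi n p (act n (A ^\<^sub>m k) (act n A f)) (\<lambda>_. 1) = 0"
    and ih2: "ipi n p (act n (A ^\<^sub>m k) (act n A f)) (act n (A ^\<^sub>m k) (act n A f)) \<le> c2 ^ k * ipi n p (act n A f) (act n A f)"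
    by auto
  have "c2 ^ k * ipi n p (act n A f) (act n A f) \<le> c2 ^ k * (c2 * ipi n p f f)"
    by (rule mult_left_mono[OF step[OF Suc.prems]]) (use c2 in simp)
  with ih2 have "ipi n p (act n (A ^\<^sub>m Suc k) f) (act n (A ^\<^sub>m Suc k) f) \<le> c2 ^ Suc k * ipi n p f f"
    unfolding e by (simp add: mult_ac)
  then show ?case using ih1 e by simp
qed




lemma frob_bound:
  assumes pp: "\<And>x. x < n \<Longrightarrow> p x > 0" and psum: "(\<Sum>x<n. p x) = 1"
    and B: "B \<in> carrier_mat n n" and Bone: "\<And>y. y < n \<Longrightarrow> act n B (\<lambda>_. 1) y = 1"
    and bnd: "\<And>f. ipi n p f (\<lambda>_. 1) = 0 \<Longrightarrow> ipi n p (act n B f) (act n B f) \<le> K * ipi n p f f"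
  shows "frob_sq n p (B - Pi_mat n p) \<le> K * (real n - 1)"
proof -
  define M where "M = B - Pi_mat n p"
  have Pc: "Pi_mat n p \<in> carrier_mat n n" unfolding Pi_mat_def by simp
  have M: "M \<in> carrier_mat n n" unfolding M_def by (rule minus_carrier_mat[OF Pc])
  have Mij: "\<And>y x. y < n \<Longrightarrow> x < n \<Longrightarrow> M $$ (y,x) = B $$ (y,x) - p x"
    unfolding M_def Pi_mat_def using B by simp
  define g where "g = (\<lambda>x z. (if z = x then 1 else 0) - p x)"
  have actg: "act n B (g x) y = M $$ (y,x)" if x: "x < n" and y: "y < n" for x y
  proof -
    have "act n B (g x) y = (\<Sum>z<n. B $$ (y,z) * (if z = x then 1 else 0)) - p x * (\<Sum>z<n. B $$ (y,z))"
      unfolding act_def g_def using y by (simp add: right_diff_distrib sum_subtractf sum_distrib_left mult_ac)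
    also have "(\<Sum>z<n. B $$ (y,z) * (if z = x then 1 else 0)) = B $$ (y,x)"
      using x by (simp add: if_distrib[of "\<lambda>t. B $$ (y,_) * t"] cong: if_cong)
    also have "(\<Sum>z<n. B $$ (y,z)) = 1" using Bone[OF y] y by (simp add: act_def)
    finally show ?thesis using Mij[OF y x] by simp
  qed
  have gone: "ipi n p (g x) (\<lambda>_. 1) = 0" if x: "x < n" for x
  proof -
    have "ipi n p (g x) (\<lambda>_. 1) = (\<Sum>z<n. p z * (if z = x then 1 else 0)) - p x * (\<Sum>z<n. p z)"
      unfolding ipi_def g_def by (simp add: right_diff_distrib sum_subtractf sum_distrib_left mult_ac)
    also have "(\<Sum>z<n. p z * (if z = x then 1 else 0)) = p x"
      using x by (simp add: if_distrib[of "\<lambda>t. p _ * t"] cong: if_cong)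
    finally show ?thesis using psum by simp
  qed
  have gg: "ipi n p (g x) (g x) = p x - (p x)\<^sup>2" if x: "x < n" for x
  proof -
    have e: "\<And>z. p z * g x z * g x z = p z * (if z = x then 1 else 0) * (1 - 2 * p x) + p z * (p x)\<^sup>2"
      unfolding g_def by (simp add: power2_eq_square algebra_simps)
    have "ipi n p (g x) (g x) = (\<Sum>z<n. p z * (if z = x then 1 else 0)) * (1 - 2 * p x) + (\<Sum>z<n. p z) * (p x)\<^sup>2"
      unfolding ipi_def e by (simp add: sum.distrib sum_distrib_right)
    also have "(\<Sum>z<n. p z * (if z = x then 1 else 0)) = p x"
      using x by (simp add: if_distrib[of "\<lambda>t. p _ * t"] cong: if_cong)
    finally show ?thesis using psum by (simp add: power2_eq_square algebra_simps)
  qed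
  have diag: "(pi_adjoint n p M * M) $$ (x,x) \<le> K * (1 - p x)" if x: "x < n" for x
  proof -
    have "(pi_adjoint n p M * M) $$ (x,x) = (\<Sum>y<n. (p y * M $$ (y,x) / p x) * M $$ (y,x))"
      unfolding pi_adjoint_def using x M by (simp add: scalar_prod_def row_def col_def atLeast0LessThan)
    also have "\<dots> = (1 / p x) * ipi n p (act n B (g x)) (act n B (g x))"
      unfolding ipi_def sum_distrib_left by (intro sum.cong refl) (simp add: actg x)
    also have "\<dots> \<le> (1 / p x) * (K * (p x - (p x)\<^sup>2))"
      by (rule mult_left_mono) (use bnd[OF gone[OF x]] gg[OF x] pp[OF x] in auto)
    also have "\<dots> = K * (1 - p x)" using pp[OF x] by (simp add: field_simps power2_eq_square)
    finally show ?thesis .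
  qed
  have "frob_sq n p M = (\<Sum>x<n. (pi_adjoint n p M * M) $$ (x,x))" unfolding frob_sq_def ..
  also have "\<dots> \<le> (\<Sum>x<n. K * (1 - p x))" by (rule sum_mono) (use diag in auto)
  also have "\<dots> = K * (\<Sum>x<n. (1 - p x))" by (rule sum_distrib_left[symmetric])
  also have "(\<Sum>x<n. (1 - p x)) = real n - 1" using psum by (simp add: sum_subtractf)
  finally show ?thesis unfolding M_def .
qed




theorem corollary4p12:
  fixes n :: nat and \<pi> :: "nat \<Rightarrow> real" and P :: "real mat" and Os :: "nat set set"
    and l :: nat and \<alpha> :: real
  assumes "prob_dist n \<pi>"
    and "transition_matrix n P"
    and "reversible n \<pi> P"
    and "partition_on {..<n} Os"
    and "l \<ge> 2"
    and "0 < \<alpha>" and "\<alpha> < 1"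
  shows "frob_sq n \<pi> ((\<alpha> \<cdot>\<^sub>m P + (1 - \<alpha>) \<cdot>\<^sub>m gibbs_kernel n \<pi> Os) ^\<^sub>m l - Pi_mat n \<pi>)
           \<le> real (n - 1) * (1 - \<alpha> * abs_spectral_gap n P) ^ (2 * l)"
proof -
  have pp: "\<And>x. x < n \<Longrightarrow> \<pi> x > 0" and psum: "(\<Sum>x<n. \<pi> x) = 1"
    using assms(1) unfolding prob_dist_def by auto
  have stP: "stoch n \<pi> P" using assms(2,3) unfolding stoch_def transition_matrix_def reversible_def by auto
  have stG: "stoch n \<pi> (gibbs_kernel n \<pi> Os)" by (rule gibbs_stoch[OF assms(4) pp])
  define A where "A = \<alpha> \<cdot>\<^sub>m P + (1 - \<alpha>) \<cdot>\<^sub>m gibbs_kernel n \<pi> Os"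
  have stA: "stoch n \<pi> A" unfolding A_def by (rule stoch_comb[OF stP stG]) (use assms(6,7) in auto)
  have Ac: "A \<in> carrier_mat n n" using stA unfolding stoch_def by simp
  define m where "m = max \<bar>eig_list P ! 1\<bar> \<bar>eig_list P ! (n-1)\<bar>"
  define c where "c = \<alpha> * m + (1 - \<alpha>)"
  have step: "\<And>f. ipi n \<pi> f (\<lambda>_. 1) = 0 \<Longrightarrow> ipi n \<pi> (act n A f) (act n A f) \<le> c\<^sup>2 * ipi n \<pi> f f"
    unfolding A_def c_def m_def by (rule A_step[OF pp psum stP stG]) (use assms(6,7) in auto)
  have bnd: "\<And>f. ipi n \<pi> f (\<lambda>_. 1) = 0 \<Longrightarrow> ipi n \<pi> (act n (A ^\<^sub>m l) f) (act n (A ^\<^sub>m l) f) \<le> (c\<^sup>2) ^ l * ipi n \<pi> f f"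
    using pow_bound[OF stA _ step] by simp
  have fb: "frob_sq n \<pi> (A ^\<^sub>m l - Pi_mat n \<pi>) \<le> (c\<^sup>2) ^ l * (real n - 1)"
    by (rule frob_bound[OF pp psum pow_carrier_mat[OF Ac] pow_one[OF stA] bnd])
  have n1: "n \<ge> 1" using psum by (cases n) auto
  have "1 - \<alpha> * abs_spectral_gap n P = c" unfolding abs_spectral_gap_def c_def m_def by (simp add: algebra_simps)
  hence "real (n - 1) * (1 - \<alpha> * abs_spectral_gap n P) ^ (2 * l) = (c\<^sup>2) ^ l * (real n - 1)"
    using n1 by (simp add: power_mult of_nat_diff)
  then show ?thesis using fb unfolding A_def by simp
qed


end
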